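(* Let $b\ge2$. Define the estimated MMD loss $$\mathsf{L}'^k_{b,n}(\theta,u_{1:b})=-\frac{2}{nb}\sum_{i=1}^n\sum_{j=1}^bk(u_j,y_i)+\frac{1}{b(b-1)}\sum_{j=1}^b\sum_{j'\ne j}k(u_j,u_{j'}),$$ and, with $v_{1:b}\sim p_v$ i.i.d. and $u_k=G_\theta(v_k)$, $$\varphi_{b,n}(\theta)=\sum_{k=1}^b\sum_{l=1}^p\Big[\frac{\partial}{\partial u_{kl}}\mathsf{L}'^k_{b,n}(\theta,u_{1:b})\Big]_{u_{1:b}=G_\theta(v_{1:b})}\nabla_\theta G_{\theta,l}(v_k).$$ Then $\mathbb{E}_{v_{1:b}\sim p_v}[\varphi_{b,n}(\theta)]=\nabla_\theta\mathsf{L}^k_n(\theta)$. Moreover, suppose there exist $Q_j:\mathbb{R}^p\times\Theta\to\mathbb{R}$ and $R_j:\Theta\to\mathbb{R}$, $j=1,\dots,d$, such that for all $v,v'$ in the support of $p_v$ and all $y$, $$Q_j(y,\theta)\ge\Big|\sum_{l=1}^p\Big[\frac{\partial}{\partial u_l}k(y,u)\Big]_{u=G_\theta(v)}\frac{\partial}{\partial\theta_j}G_{\theta,l}(v)\Big|,$$ $$R_j(\theta)\ge\Big|\sum_{l=1}^p\Big[\frac{\partial}{\partial u_l}k(u,G_\theta(v'))\Big]_{u=G_\theta(v)}\frac{\partial}{\partial\theta_j}G_{\theta,l}(v)+\Big[\frac{\partial}{\partial u'_l}k(G_\theta(v),u')\Big]_{u'=G_\theta(v')}\frac{\partial}{\partial\theta_j}G_{\theta,l}(v')\Big|.$$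 Then, for $\hat\lambda_j(\theta,\nu)=\max\{\nu_j[-\nabla_\theta\log\pi(\theta)+\omega\varphi_{b,n}(\theta)]_j,0\}$, for all $v_{1:b}$, $\theta$ and $\nu\in\{-1,1\}^d$, $$\hat\lambda_j(\theta,\nu)\le\Big|\frac{\partial}{\partial\theta_j}\log\pi(\theta)\Big|+\omega\frac{2}{n}\sum_{i=1}^nQ_j(y_i,\theta)+\omega R_j(\theta).$$
   Context: Observations $y_1,\dots,y_n\in\mathbb{R}^p$. $k:\mathbb{R}^p\times\mathbb{R}^p\to\mathbb{R}_{\ge0}$ is a symmetric positive-definite, differentiable kernel. The model $P_\theta$, $\theta\in\Theta\subseteq\mathbb{R}^d$, is given by a generator: $u\sim P_\theta$ is obtained as $u=G_\theta(v)=(G_{\theta,1}(v),\dots,G_{\theta,p}(v))$ with $v\sim p_v$, where $p_v$ does not depend on $\theta$ and $G_\theta(v)$ is differentiable in $\theta$; differentiation in $\theta$ is assumed interchangeable with expectation over $v$. The MMD loss is $\mathsf{L}^k_n(\theta)=-\frac2n\sum_{i=1}^n\mathbb{E}_{U\sim P_\theta}[k(U,y_i)]+\mathbb{E}_{U,U'\sim P_\theta\text{ i.i.d.}}[k(U,U')]$. $\pi$ is a differentiable prior density and $\omega>0$. *)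

theory Defs
  imports "HOL-Probability.Probability"
begin

definition partial_deriv :: "(real^'n \<Rightarrow> real) \<Rightarrow> real^'n \<Rightarrow> 'n \<Rightarrow> real" where
  "partial_deriv f x i = deriv (\<lambda>t. f (x + t *\<^sub>R axis i 1)) 0"

definition pd_kernel :: "('a \<Rightarrow> 'a \<Rightarrow> real) \<Rightarrow> bool" where
  "pd_kernel k \<longleftrightarrow>
     (\<forall>(m::nat) (x::nat \<Rightarrow> 'a) (c::nat \<Rightarrow> real).
        (\<Sum>i<m. \<Sum>j<m. c i * c j * k (x i) (x j)) \<ge> 0)"

definition MMD_loss ::
  "(real^'p \<Rightarrow> real^'p \<Rightarrow> real) \<Rightarrow> 'v measure \<Rightarrow> ('a \<Rightarrow> 'v \<Rightarrow> real^'p)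
     \<Rightarrow> nat \<Rightarrow> (nat \<Rightarrow> real^'p) \<Rightarrow> 'a \<Rightarrow> real" where
  "MMD_loss k pv G n y \<theta> =
     - 2 / real n * (\<Sum>i=1..n. \<integral>v. k (G \<theta> v) (y i) \<partial>pv)
     + (\<integral>z. k (G \<theta> (fst z)) (G \<theta> (snd z)) \<partial>(pv \<Otimes>\<^sub>M pv))"

definition est_MMD_loss ::
  "(real^'p \<Rightarrow> real^'p \<Rightarrow> real) \<Rightarrow> nat \<Rightarrow> nat \<Rightarrow> (nat \<Rightarrow> real^'p)
     \<Rightarrow> (nat \<Rightarrow> real^'p) \<Rightarrow> real" where
  "est_MMD_loss k b n y u =
     - 2 / (real n * real b) * (\<Sum>i=1..n. \<Sum>j=1..b. k (u j) (y i))
     + 1 / (real b * (real b - 1)) * (\<Sum>j=1..b. \<Sum>j'\<in>{1..b} - {j}. k (u j) (u j'))"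

definition partial_u ::
  "((nat \<Rightarrow> real^'p) \<Rightarrow> real) \<Rightarrow> (nat \<Rightarrow> real^'p) \<Rightarrow> nat \<Rightarrow> 'p \<Rightarrow> real" where
  "partial_u F u kk l = deriv (\<lambda>t. F (u(kk := u kk + t *\<^sub>R axis l 1))) 0"

definition phi ::
  "(real^'p \<Rightarrow> real^'p \<Rightarrow> real) \<Rightarrow> (real^'d \<Rightarrow> 'v \<Rightarrow> real^'p) \<Rightarrow> nat \<Rightarrow> nat
     \<Rightarrow> (nat \<Rightarrow> real^'p) \<Rightarrow> real^'d \<Rightarrow> (nat \<Rightarrow> 'v) \<Rightarrow> real^'d" where
  "phi k G b n y \<theta> vs =
     (\<chi> j. \<Sum>kk=1..b. \<Sum>l\<in>UNIV.
        partial_u (est_MMD_loss k b n y) (\<lambda>m. G \<theta> (vs m)) kk l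
        * partial_deriv (\<lambda>\<theta>'. G \<theta>' (vs kk) $ l) \<theta> j)"

definition lambda_hat ::
  "(real^'d \<Rightarrow> real) \<Rightarrow> real \<Rightarrow> real^'d \<Rightarrow> real^'d \<Rightarrow> real^'d \<Rightarrow> 'd \<Rightarrow> real" where
  "lambda_hat prior \<omega> ph \<theta> \<nu> j =
     max (\<nu> $ j * (- partial_deriv (\<lambda>\<theta>'. ln (prior \<theta>')) \<theta> j + \<omega> * ph $ j)) 0"

end

theory Submission
  imports Defs
begin

lemma pair_comp:
  assumes pv: "prob_space pv" and I: "finite I" "a\<in>I" "c\<in>I" "a\<noteq>c"
  shows "distr (PiM I (\<lambda>_. pv)) (pv \<Otimes>\<^sub>M pv) (\<lambda>vs. (vs a, vs c)) = pv \<Otimes>\<^sub>M pv"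
proof (rule pair_measure_eqI[symmetric])
  interpret prob_space pv by fact
  show "sigma_finite_measure pv" by unfold_locales
  show "sigma_finite_measure pv" by unfold_locales
  show "sets (pv \<Otimes>\<^sub>M pv) = sets (distr (PiM I (\<lambda>_. pv)) (pv \<Otimes>\<^sub>M pv) (\<lambda>vs. (vs a, vs c)))"
    by simp
  fix A B assume A: "A \<in> sets pv" and B: "B \<in> sets pv"
  have meas: "(\<lambda>vs. (vs a, vs c)) \<in> measurable (PiM I (\<lambda>_. pv)) (pv \<Otimes>\<^sub>M pv)"
    using I by measurable
  have eq: "(\<lambda>vs. (vs a, vs c)) -` (A \<times> B) \<inter> space (PiM I (\<lambda>_. pv))
      = prod_emb I (\<lambda>_. pv) {a,c} (Pi\<^sub>E {a,c} (\<lambda>i. if i = a then A else B))"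
    using I by (auto simp: prod_emb_def space_PiM PiE_iff)
  have "emeasure (distr (PiM I (\<lambda>_. pv)) (pv \<Otimes>\<^sub>M pv) (\<lambda>vs. (vs a, vs c))) (A \<times> B)
      = emeasure (PiM I (\<lambda>_. pv)) ((\<lambda>vs. (vs a, vs c)) -` (A \<times> B) \<inter> space (PiM I (\<lambda>_. pv)))"
    using A B meas by (intro emeasure_distr) auto
  also have "\<dots> = (\<Prod>i\<in>{a,c}. emeasure pv (if i = a then A else B))"
    unfolding eq using I A B pv by (intro emeasure_PiM_emb) auto
  also have "\<dots> = emeasure pv A * emeasure pv B" using I by simp
  finally show "emeasure pv A * emeasure pv B = emeasure (distr (PiM I (\<lambda>_. pv)) (pv \<Otimes>\<^sub>M pv) (\<lambda>vs. (vs a, vs c))) (A \<times> B)"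
    by simp
qed

lemma int_comp1:
  fixes f :: "'v \<Rightarrow> real"
  assumes pv: "prob_space pv" and I: "a\<in>I" and f: "integrable pv f"
  shows "integrable (PiM I (\<lambda>_. pv)) (\<lambda>vs. f (vs a))"
    "(\<integral>vs. f (vs a) \<partial>PiM I (\<lambda>_. pv)) = integral\<^sup>L pv f"
proof -
  have D: "distr (PiM I (\<lambda>_. pv)) pv (\<lambda>vs. vs a) = pv"
    using distr_PiM_component[of I "\<lambda>_. pv" a] pv I by auto
  have m: "(\<lambda>vs. vs a) \<in> measurable (PiM I (\<lambda>_. pv)) pv" using I by measurable
  have fm: "f \<in> borel_measurable pv" using f by auto
  show "integrable (PiM I (\<lambda>_. pv)) (\<lambda>vs. f (vs a))"
    using integrable_distr_eq[OF m fm] f D by simp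
  show "(\<integral>vs. f (vs a) \<partial>PiM I (\<lambda>_. pv)) = integral\<^sup>L pv f"
    using integral_distr[OF m fm] D by simp
qed

lemma int_comp2:
  fixes f :: "'v \<times> 'v \<Rightarrow> real"
  assumes pv: "prob_space pv" and I: "finite I" "a\<in>I" "c\<in>I" "a\<noteq>c" and f: "integrable (pv \<Otimes>\<^sub>M pv) f"
  shows "integrable (PiM I (\<lambda>_. pv)) (\<lambda>vs. f (vs a, vs c))"
    "(\<integral>vs. f (vs a, vs c) \<partial>PiM I (\<lambda>_. pv)) = integral\<^sup>L (pv \<Otimes>\<^sub>M pv) f"
proof -
  note D = pair_comp[OF pv I]
  have m: "(\<lambda>vs. (vs a, vs c)) \<in> measurable (PiM I (\<lambda>_. pv)) (pv \<Otimes>\<^sub>M pv)" using I by measurable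
  have fm: "f \<in> borel_measurable (pv \<Otimes>\<^sub>M pv)" using f by auto
  show "integrable (PiM I (\<lambda>_. pv)) (\<lambda>vs. f (vs a, vs c))"
    using integrable_distr_eq[OF m fm] f D by simp
  show "(\<integral>vs. f (vs a, vs c) \<partial>PiM I (\<lambda>_. pv)) = integral\<^sup>L (pv \<Otimes>\<^sub>M pv) f"
    using integral_distr[OF m fm] D by simp
qed

lemma pd_hd:
  fixes f :: "real^'n \<Rightarrow> real"
  assumes f: "(f has_derivative f') (at x)"
  shows "((\<lambda>t. f (x + t *\<^sub>R axis i 1)) has_real_derivative f' (axis i 1)) (at 0)"
    "partial_deriv f x i = f' (axis i 1)"
proof -
  have l: "((\<lambda>t. x + t *\<^sub>R axis i 1) has_derivative (\<lambda>t. t *\<^sub>R axis i 1)) (at (0::real))"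
    by (auto intro!: derivative_eq_intros)
  have f0: "(f has_derivative f') (at ((\<lambda>t. x + t *\<^sub>R axis i 1) 0))" using f by simp
  have c: "((\<lambda>t. f (x + t *\<^sub>R axis i 1)) has_derivative (\<lambda>t. f' (t *\<^sub>R axis i 1))) (at 0)"
    using has_derivative_compose[OF l f0] by simp
  have lin: "linear f'" using f has_derivative_linear by blast
  have "(\<lambda>t. f' (t *\<^sub>R axis i 1)) = (*) (f' (axis i 1))"
    using lin by (auto simp: linear_scale fun_eq_iff)
  then show "((\<lambda>t. f (x + t *\<^sub>R axis i 1)) has_real_derivative f' (axis i 1)) (at 0)"
    using c by (simp add: has_field_derivative_def)
  then show "partial_deriv f x i = f' (axis i 1)"
    unfolding partial_deriv_def by (rule DERIV_imp_deriv)
qed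

lemma lin_expand:
  fixes L :: "real^'n \<Rightarrow> real"
  assumes "linear L"
  shows "L h = (\<Sum>l\<in>UNIV. L (axis l 1) * h $ l)"
proof -
  have "L h = L (\<Sum>l\<in>UNIV. (h $ l) *\<^sub>R axis l 1)"
    using basis_expansion[of h] by (simp add: scalar_mult_eq_scaleR)
  also have "\<dots> = (\<Sum>l\<in>UNIV. (h $ l) * L (axis l 1))"
    using assms by (simp add: linear_sum linear_scale)
  finally show ?thesis by (simp add: mult.commute)
qed

lemma lin_fst:
  fixes L :: "'a::real_vector \<times> 'b::real_vector \<Rightarrow> 'c::real_vector"
  shows "linear L \<Longrightarrow> linear (\<lambda>h. L (h,0))"
proof -
  assume L: "linear L"
  have "linear (\<lambda>h::'a. (h, 0::'b))" by (auto simp: linear_iff)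
  from linear_compose[OF this L] show ?thesis by (simp add: o_def)
qed
lemma lin_snd:
  fixes L :: "'a::real_vector \<times> 'b::real_vector \<Rightarrow> 'c::real_vector"
  shows "linear L \<Longrightarrow> linear (\<lambda>h. L (0,h))"
proof -
  assume L: "linear L"
  have "linear (\<lambda>h::'b. (0::'a, h))" by (auto simp: linear_iff)
  from linear_compose[OF this L] show ?thesis by (simp add: o_def)
qed

context
  fixes k :: "real^'p \<Rightarrow> real^'p \<Rightarrow> real" and Kd
  assumes H: "\<forall>x z. ((\<lambda>w. k (fst w) (snd w)) has_derivative Kd x z) (at (x,z))"
begin

lemma k1_hd: "((\<lambda>u. k u z) has_derivative (\<lambda>h. Kd x z (h,0))) (at x)"
proof -
  have l: "((\<lambda>u. (u,z)) has_derivative (\<lambda>h. (h,0))) (at x)"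
    by (auto intro!: derivative_eq_intros)
  have f0: "((\<lambda>w. k (fst w) (snd w)) has_derivative Kd x z) (at ((\<lambda>u. (u,z)) x))" using H by simp
  show ?thesis using has_derivative_compose[OF l f0] by simp
qed

lemma k2_hd: "((\<lambda>u. k x u) has_derivative (\<lambda>h. Kd x z (0,h))) (at z)"
proof -
  have l: "((\<lambda>u. (x,u)) has_derivative (\<lambda>h. (0,h))) (at z)"
    by (auto intro!: derivative_eq_intros)
  have f0: "((\<lambda>w. k (fst w) (snd w)) has_derivative Kd x z) (at ((\<lambda>u. (x,u)) z))" using H by simp
  show ?thesis using has_derivative_compose[OF l f0] by simp
qed

lemma d1_eq: "partial_deriv (\<lambda>u. k u z) x l = Kd x z (axis l 1, 0)"
  using pd_hd(2)[OF k1_hd] .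
lemma d2_eq: "partial_deriv (\<lambda>u. k x u) z l = Kd x z (0, axis l 1)"
  using pd_hd(2)[OF k2_hd] .
lemma d1_der: "((\<lambda>t. k (x + t *\<^sub>R axis l 1) z) has_real_derivative partial_deriv (\<lambda>u. k u z) x l) (at 0)"
  using pd_hd[OF k1_hd] by simp
lemma d2_der: "((\<lambda>t. k x (z + t *\<^sub>R axis l 1)) has_real_derivative partial_deriv (\<lambda>u. k x u) z l) (at 0)"
  using pd_hd[OF k2_hd] by simp

lemma linK: "linear (Kd x z)" using H has_derivative_linear by blast

lemma chainA:
  assumes G: "((\<lambda>\<theta>'. G \<theta>' v) has_derivative G') (at \<theta>)"
  shows "partial_deriv (\<lambda>\<theta>'. k (G \<theta>' v) z) \<theta> j
     = (\<Sum>l\<in>UNIV. partial_deriv (\<lambda>u. k u z) (G \<theta> v) l * partial_deriv (\<lambda>\<theta>'. G \<theta>' v $ l) \<theta> j)"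
proof -
  have K: "((\<lambda>u. k u z) has_derivative (\<lambda>h. Kd (G \<theta> v) z (h,0))) (at ((\<lambda>\<theta>'. G \<theta>' v) \<theta>))"
    using k1_hd by simp
  have c: "((\<lambda>\<theta>'. k (G \<theta>' v) z) has_derivative (\<lambda>h. Kd (G \<theta> v) z (G' h, 0))) (at \<theta>)"
    using has_derivative_compose[OF G K] by simp
  have Gl: "((\<lambda>\<theta>'. G \<theta>' v $ l) has_derivative (\<lambda>h. G' h $ l)) (at \<theta>)" for l
    using bounded_linear.has_derivative[OF bounded_linear_vec_nth G] .
  have lin: "linear (\<lambda>h. Kd (G \<theta> v) z (h,0))"
    by (rule lin_fst[OF linK])
  show ?thesis
    unfolding pd_hd(2)[OF c] pd_hd(2)[OF Gl] d1_eq
    by (rule lin_expand[OF lin])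
qed

lemma chainB:
  assumes G: "((\<lambda>\<theta>'. G \<theta>' v) has_derivative G') (at \<theta>)"
    and G2: "((\<lambda>\<theta>'. G \<theta>' v') has_derivative G2') (at \<theta>)"
  shows "partial_deriv (\<lambda>\<theta>'. k (G \<theta>' v) (G \<theta>' v')) \<theta> j
     = (\<Sum>l\<in>UNIV. partial_deriv (\<lambda>u. k u (G \<theta> v')) (G \<theta> v) l * partial_deriv (\<lambda>\<theta>'. G \<theta>' v $ l) \<theta> j
          + partial_deriv (\<lambda>u'. k (G \<theta> v) u') (G \<theta> v') l * partial_deriv (\<lambda>\<theta>'. G \<theta>' v' $ l) \<theta> j)"
proof -
  let ?x = "G \<theta> v" and ?z = "G \<theta> v'"
  have P: "((\<lambda>\<theta>'. (G \<theta>' v, G \<theta>' v')) has_derivative (\<lambda>h. (G' h, G2' h))) (at \<theta>)"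
    using G G2 by (rule has_derivative_Pair)
  have K: "((\<lambda>w. k (fst w) (snd w)) has_derivative Kd ?x ?z) (at ((\<lambda>\<theta>'. (G \<theta>' v, G \<theta>' v')) \<theta>))"
    using H by simp
  have c: "((\<lambda>\<theta>'. k (G \<theta>' v) (G \<theta>' v')) has_derivative (\<lambda>h. Kd ?x ?z (G' h, G2' h))) (at \<theta>)"
    using has_derivative_compose[OF P K] by simp
  have Gl: "((\<lambda>\<theta>'. G \<theta>' v $ l) has_derivative (\<lambda>h. G' h $ l)) (at \<theta>)" for l
    using bounded_linear.has_derivative[OF bounded_linear_vec_nth G] .
  have Gl2: "((\<lambda>\<theta>'. G \<theta>' v' $ l) has_derivative (\<lambda>h. G2' h $ l)) (at \<theta>)" for l
    using bounded_linear.has_derivative[OF bounded_linear_vec_nth G2] .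
  have lin1: "linear (\<lambda>h. Kd ?x ?z (h,0))"
    by (rule lin_fst[OF linK])
  have lin2: "linear (\<lambda>h. Kd ?x ?z (0,h))"
    by (rule lin_snd[OF linK])
  have split: "Kd ?x ?z (G' (axis j 1), G2' (axis j 1)) = Kd ?x ?z (G' (axis j 1),0) + Kd ?x ?z (0,G2' (axis j 1))"
    using linear_add[OF linK[of ?x ?z], of "(G' (axis j 1),0)" "(0,G2' (axis j 1))"] by simp
  show ?thesis
    unfolding pd_hd(2)[OF c] pd_hd(2)[OF Gl] pd_hd(2)[OF Gl2] d1_eq d2_eq split
    by (simp add: lin_expand[OF lin1, of "G' (axis j 1)"] lin_expand[OF lin2, of "G2' (axis j 1)"] sum.distrib)
qed
end

lemma offdiag_if:
  fixes f g :: "nat \<Rightarrow> real"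
  assumes "kk \<in> A" "finite A"
  shows "(\<Sum>j\<in>A. \<Sum>j'\<in>A - {j}. (if j = kk then f j' else if j' = kk then g j else 0))
       = (\<Sum>j'\<in>A - {kk}. f j') + (\<Sum>j\<in>A - {kk}. g j)"
proof -
  let ?F = "\<lambda>j. \<Sum>j'\<in>A - {j}. (if j = kk then f j' else if j' = kk then g j else 0)"
  have "(\<Sum>j\<in>A. ?F j) = ?F kk + (\<Sum>j\<in>A - {kk}. ?F j)"
    by (rule sum.remove[OF assms(2,1)])
  also have "?F kk = (\<Sum>j'\<in>A - {kk}. f j')" by simp
  also have "(\<Sum>j\<in>A - {kk}. ?F j) = (\<Sum>j\<in>A - {kk}. g j)"
  proof (rule sum.cong[OF refl])
    fix j assume j: "j \<in> A - {kk}"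
    then have "?F j = (\<Sum>j'\<in>A - {j}. (if j' = kk then g j else 0))" by auto
    also have "\<dots> = g j" using j assms by (simp add: sum.delta'[of "A - {j}" kk "\<lambda>_. g j"])
    finally show "?F j = g j" .
  qed
  finally show ?thesis .
qed

context
  fixes k :: "real^'p \<Rightarrow> real^'p \<Rightarrow> real" and Kd
  assumes H: "\<forall>x z. ((\<lambda>w. k (fst w) (snd w)) has_derivative Kd x z) (at (x,z))"
begin

lemma partial_u_est:
  assumes kk: "kk \<in> {1..b}"
  shows "partial_u (est_MMD_loss k b n y) u kk l =
     - 2 / (real n * real b) * (\<Sum>i=1..n. partial_deriv (\<lambda>w. k w (y i)) (u kk) l)
     + 1 / (real b * (real b - 1)) * ((\<Sum>j'\<in>{1..b}-{kk}. partial_deriv (\<lambda>w. k w (u j')) (u kk) l)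
                                    + (\<Sum>j\<in>{1..b}-{kk}. partial_deriv (\<lambda>w. k (u j) w) (u kk) l))"
proof -
  let ?e = "axis l 1 :: real^'p"
  define u' where "u' t = u(kk := u kk + t *\<^sub>R ?e)" for t :: real
  let ?D1 = "\<lambda>x z. partial_deriv (\<lambda>w. k w z) x l"
  let ?D2 = "\<lambda>x z. partial_deriv (\<lambda>w. k x w) z l"
  have T1: "((\<lambda>t. k (u' t j) z) has_real_derivative (if j = kk then ?D1 (u kk) z else 0)) (at 0)" for j z
    using d1_der[OF H, of "u kk" l z] by (cases "j = kk") (auto simp: u'_def)
  have T2: "((\<lambda>t. k (u' t j) (u' t j')) has_real_derivative
      (if j = kk then ?D1 (u kk) (u j') else if j' = kk then ?D2 (u j) (u kk) else 0)) (at 0)"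
    if "j \<noteq> j'" for j j'
    using d1_der[OF H, of "u kk" l "u j'"] d2_der[OF H, of "u j" "u kk" l] that
    by (cases "j = kk"; cases "j' = kk") (auto simp: u'_def)
  have D: "((\<lambda>t. est_MMD_loss k b n y (u' t)) has_real_derivative
      - 2 / (real n * real b) * (\<Sum>i=1..n. \<Sum>j=1..b. (if j = kk then ?D1 (u kk) (y i) else 0))
      + 1 / (real b * (real b - 1)) * (\<Sum>j=1..b. \<Sum>j'\<in>{1..b} - {j}.
            (if j = kk then ?D1 (u kk) (u j') else if j' = kk then ?D2 (u j) (u kk) else 0))) (at 0)"
    unfolding est_MMD_loss_def
    by (intro DERIV_add DERIV_cmult DERIV_sum T1 T2) auto
  have eq: "(\<Sum>i=1..n. \<Sum>j=1..b. (if j = kk then ?D1 (u kk) (y i) else 0)) = (\<Sum>i=1..n. ?D1 (u kk) (y i))"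
    using kk by simp
  have "partial_u (est_MMD_loss k b n y) u kk l = deriv (\<lambda>t. est_MMD_loss k b n y (u' t)) 0"
    unfolding partial_u_def u'_def ..
  with DERIV_imp_deriv[OF D] show ?thesis unfolding eq offdiag_if[OF kk finite_atLeastAtMost] by simp
qed
end

lemma offdiag_swap:
  assumes "finite A"
  shows "(\<Sum>a\<in>A. \<Sum>c\<in>A-{a}. f a c) = (\<Sum>c\<in>A. \<Sum>a\<in>A-{c}. (f a c :: real))"
proof -
  have e: "(\<Sum>c\<in>A-{a}. f a c) = (\<Sum>c\<in>A. if c = a then 0 else f a c)" for a
    using assms by (simp add: sum.If_cases Diff_eq)
  have e2: "(\<Sum>a\<in>A-{c}. f a c) = (\<Sum>a\<in>A. if c = a then 0 else f a c)" for c
    using assms by (simp add: sum.If_cases Diff_eq eq_commute)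
  show ?thesis unfolding e e2 by (rule sum.swap)
qed

context
  fixes k :: "real^'p \<Rightarrow> real^'p \<Rightarrow> real" and Kd
  assumes H: "\<forall>x z. ((\<lambda>w. k (fst w) (snd w)) has_derivative Kd x z) (at (x,z))"
begin

lemma phi_expr:
  fixes G :: "real^'d \<Rightarrow> 'v \<Rightarrow> real^'p" and \<theta> :: "real^'d" and j :: 'd
  defines "g \<equiv> \<lambda>v l. partial_deriv (\<lambda>\<theta>'. G \<theta>' v $ l) \<theta> j"
  defines "A \<equiv> \<lambda>v z. \<Sum>l\<in>UNIV. partial_deriv (\<lambda>w. k w z) (G \<theta> v) l * g v l"
  defines "B \<equiv> \<lambda>v v'. \<Sum>l\<in>UNIV. partial_deriv (\<lambda>w. k w (G \<theta> v')) (G \<theta> v) l * g v l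
                              + partial_deriv (\<lambda>w. k (G \<theta> v) w) (G \<theta> v') l * g v' l"
  shows "phi k G b n y \<theta> vs $ j =
     - 2 / (real n * real b) * (\<Sum>kk=1..b. \<Sum>i=1..n. A (vs kk) (y i))
     + 1 / (real b * (real b - 1)) * (\<Sum>kk=1..b. \<Sum>c\<in>{1..b}-{kk}. B (vs kk) (vs c))"
proof -
  let ?c1 = "- 2 / (real n * real b)" and ?c2 = "1 / (real b * (real b - 1))"
  let ?u = "\<lambda>m. G \<theta> (vs m)"
  define X where "X kk l = (\<Sum>i=1..n. partial_deriv (\<lambda>w. k w (y i)) (?u kk) l)" for kk l
  define Y where "Y kk l = (\<Sum>j'\<in>{1..b}-{kk}. partial_deriv (\<lambda>w. k w (?u j')) (?u kk) l)" for kk l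
  define Z where "Z kk l = (\<Sum>j'\<in>{1..b}-{kk}. partial_deriv (\<lambda>w. k (?u j') w) (?u kk) l)" for kk l
  have "phi k G b n y \<theta> vs $ j = (\<Sum>kk=1..b. \<Sum>l\<in>UNIV. (?c1 * X kk l + ?c2 * (Y kk l + Z kk l)) * g (vs kk) l)"
    unfolding phi_def X_def Y_def Z_def g_def
    by (auto intro!: sum.cong simp: partial_u_est[OF H])
  also have "\<dots> = ?c1 * (\<Sum>kk=1..b. \<Sum>l\<in>UNIV. X kk l * g (vs kk) l)
      + ?c2 * ((\<Sum>kk=1..b. \<Sum>l\<in>UNIV. Y kk l * g (vs kk) l) + (\<Sum>kk=1..b. \<Sum>l\<in>UNIV. Z kk l * g (vs kk) l))"
  proof -
    have pt: "(?c1 * X kk l + ?c2 * (Y kk l + Z kk l)) * g (vs kk) l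
       = ?c1 * (X kk l * g (vs kk) l) + (?c2 * (Y kk l * g (vs kk) l) + ?c2 * (Z kk l * g (vs kk) l))" for kk l
      by (simp add: algebra_simps add_divide_distrib)
    show ?thesis unfolding pt sum.distrib by (simp only: sum_distrib_left distrib_left)
  qed
  also have "(\<Sum>kk=1..b. \<Sum>l\<in>UNIV. X kk l * g (vs kk) l) = (\<Sum>kk=1..b. \<Sum>i=1..n. A (vs kk) (y i))"
    unfolding X_def A_def sum_distrib_right by (intro sum.cong refl sum.swap)
  also have "(\<Sum>kk=1..b. \<Sum>l\<in>UNIV. Y kk l * g (vs kk) l)
     = (\<Sum>kk=1..b. \<Sum>c\<in>{1..b}-{kk}. \<Sum>l\<in>UNIV. partial_deriv (\<lambda>w. k w (?u c)) (?u kk) l * g (vs kk) l)"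
    unfolding Y_def sum_distrib_right by (intro sum.cong refl sum.swap)
  also have "(\<Sum>kk=1..b. \<Sum>l\<in>UNIV. Z kk l * g (vs kk) l)
     = (\<Sum>kk=1..b. \<Sum>c\<in>{1..b}-{kk}. \<Sum>l\<in>UNIV. partial_deriv (\<lambda>w. k (?u c) w) (?u kk) l * g (vs kk) l)"
    unfolding Z_def sum_distrib_right by (intro sum.cong refl sum.swap)
  also have "\<dots> = (\<Sum>kk=1..b. \<Sum>c\<in>{1..b}-{kk}. \<Sum>l\<in>UNIV. partial_deriv (\<lambda>w. k (?u kk) w) (?u c) l * g (vs c) l)"
    by (rule offdiag_swap[symmetric]) simp
  finally show ?thesis
    unfolding B_def by (simp add: sum.distrib)
qed
end
theorem lemmaB4:
  fixes k :: "real^'p \<Rightarrow> real^'p \<Rightarrow> real"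
    and G :: "real^'d \<Rightarrow> 'v \<Rightarrow> real^'p"
    and pv :: "'v measure"
    and y :: "nat \<Rightarrow> real^'p"
    and n b :: nat
    and Theta :: "(real^'d) set"
    and prior :: "real^'d \<Rightarrow> real"
    and \<omega> :: real
  assumes pv: "prob_space pv"
    and n: "n \<ge> 1"
    and b: "b \<ge> 2"
    and Theta_open: "open Theta"
    and k_nonneg: "\<forall>x z. k x z \<ge> 0"
    and k_sym: "\<forall>x z. k x z = k z x"
    and k_pd: "pd_kernel k"
    and k_diff: "\<forall>x z. (\<lambda>w. k (fst w) (snd w)) differentiable (at (x, z))"
    and G_meas: "\<forall>\<theta>. (\<lambda>v. G \<theta> v) \<in> borel_measurable pv"
    and G_diff: "\<forall>v. \<forall>\<theta>\<in>Theta. (\<lambda>\<theta>'. G \<theta>' v) differentiable (at \<theta>)"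
    and prior: "\<forall>\<theta>\<in>Theta. prior \<theta> > 0 \<and> prior differentiable (at \<theta>)"
    and \<omega>: "\<omega> > 0"
    and interchange1: "\<forall>\<theta>\<in>Theta. \<forall>j. \<forall>i\<in>{1..n}.
        integrable pv (\<lambda>v. partial_deriv (\<lambda>\<theta>'. k (G \<theta>' v) (y i)) \<theta> j) \<and>
        ((\<lambda>t. \<integral>v. k (G (\<theta> + t *\<^sub>R axis j 1) v) (y i) \<partial>pv)
           has_real_derivative (\<integral>v. partial_deriv (\<lambda>\<theta>'. k (G \<theta>' v) (y i)) \<theta> j \<partial>pv)) (at 0)"
    and interchange2: "\<forall>\<theta>\<in>Theta. \<forall>j.
        integrable (pv \<Otimes>\<^sub>M pv)
          (\<lambda>z. partial_deriv (\<lambda>\<theta>'. k (G \<theta>' (fst z)) (G \<theta>' (snd z))) \<theta> j) \<and>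
        ((\<lambda>t. \<integral>z. k (G (\<theta> + t *\<^sub>R axis j 1) (fst z)) (G (\<theta> + t *\<^sub>R axis j 1) (snd z)) \<partial>(pv \<Otimes>\<^sub>M pv))
           has_real_derivative
           (\<integral>z. partial_deriv (\<lambda>\<theta>'. k (G \<theta>' (fst z)) (G \<theta>' (snd z))) \<theta> j \<partial>(pv \<Otimes>\<^sub>M pv))) (at 0)"
  shows "(\<forall>\<theta>\<in>Theta. \<forall>j.
            (\<integral>vs. phi k G b n y \<theta> vs $ j \<partial>(PiM {1..b} (\<lambda>_. pv)))
              = partial_deriv (MMD_loss k pv G n y) \<theta> j)
       \<and> (\<forall>(Q :: 'd \<Rightarrow> real^'p \<Rightarrow> real^'d \<Rightarrow> real) (R :: 'd \<Rightarrow> real^'d \<Rightarrow> real) (S :: 'v set).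
            (\<forall>j. \<forall>\<theta>\<in>Theta. \<forall>v\<in>S. \<forall>v'\<in>S. \<forall>yy.
               Q j yy \<theta> \<ge> \<bar>\<Sum>l\<in>UNIV. partial_deriv (\<lambda>u. k yy u) (G \<theta> v) l
                                      * partial_deriv (\<lambda>\<theta>'. G \<theta>' v $ l) \<theta> j\<bar>
             \<and> R j \<theta> \<ge> \<bar>\<Sum>l\<in>UNIV. partial_deriv (\<lambda>u. k u (G \<theta> v')) (G \<theta> v) l
                                      * partial_deriv (\<lambda>\<theta>'. G \<theta>' v $ l) \<theta> j
                                    + partial_deriv (\<lambda>u'. k (G \<theta> v) u') (G \<theta> v') l
                                      * partial_deriv (\<lambda>\<theta>'. G \<theta>' v' $ l) \<theta> j\<bar>)
            \<longrightarrow> (\<forall>vs \<theta> \<nu> j. (\<forall>m\<in>{1..b}. vs m \<in> S) \<longrightarrow> \<theta> \<in> Theta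
                   \<longrightarrow> (\<forall>i. \<nu> $ i \<in> {-1, 1})
                   \<longrightarrow> lambda_hat prior \<omega> (phi k G b n y \<theta> vs) \<theta> \<nu> j
                       \<le> \<bar>partial_deriv (\<lambda>\<theta>'. ln (prior \<theta>')) \<theta> j\<bar>
                          + \<omega> * (2 / real n * (\<Sum>i=1..n. Q j (y i) \<theta>))
                          + \<omega> * R j \<theta>))"
proof -
  have "\<forall>x z. \<exists>D. ((\<lambda>w. k (fst w) (snd w)) has_derivative D) (at (x,z))"
    using k_diff by (auto simp: differentiable_def)
  then obtain Kd where H: "\<forall>x z. ((\<lambda>w. k (fst w) (snd w)) has_derivative Kd x z) (at (x,z))"
    by metis
  have b1: "real b - 1 > 0" using b by simp
  have cardb: "card ({1..b} - {kk}) = b - 1" if "kk \<in> {1..b}" for kk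
    using that by simp
  show ?thesis
  proof (intro conjI)
    show "\<forall>\<theta>\<in>Theta. \<forall>j. (\<integral>vs. phi k G b n y \<theta> vs $ j \<partial>(PiM {1..b} (\<lambda>_. pv)))
              = partial_deriv (MMD_loss k pv G n y) \<theta> j"
    proof (intro ballI allI)
      fix \<theta> j assume th: "\<theta> \<in> Theta"
      have "\<forall>v. \<exists>D. ((\<lambda>\<theta>'. G \<theta>' v) has_derivative D) (at \<theta>)"
        using G_diff th by (auto simp: differentiable_def)
      then obtain G' where G': "\<And>v. ((\<lambda>\<theta>'. G \<theta>' v) has_derivative G' v) (at \<theta>)"
        by metis
      define fA where "fA i v = partial_deriv (\<lambda>\<theta>'. k (G \<theta>' v) (y i)) \<theta> j" for i v
      define fB where "fB z = partial_deriv (\<lambda>\<theta>'. k (G \<theta>' (fst z)) (G \<theta>' (snd z))) \<theta> j" for z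
      let ?M = "PiM {1..b} (\<lambda>_. pv)"
      let ?c1 = "- 2 / (real n * real b)" and ?c2 = "1 / (real b * (real b - 1))"
      let ?SA = "\<lambda>vs. \<Sum>kk=1..b. \<Sum>i=1..n. fA i (vs kk)"
      let ?SB = "\<lambda>vs. \<Sum>kk=1..b. \<Sum>c\<in>{1..b}-{kk}. fB (vs kk, vs c)"
      have ph: "phi k G b n y \<theta> vs $ j = ?c1 * ?SA vs + ?c2 * ?SB vs" for vs
        unfolding phi_expr[OF H] fA_def fB_def
        by (simp add: chainA[OF H G'] chainB[OF H G' G'])
      have intA: "integrable pv (fA i)" if "i \<in> {1..n}" for i
        using interchange1 th that unfolding fA_def by blast
      have intB: "integrable (pv \<Otimes>\<^sub>M pv) fB"
        using interchange2 th unfolding fB_def by blast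
      have iA1: "integrable ?M (\<lambda>vs. fA i (vs kk))" and iA2: "(\<integral>vs. fA i (vs kk) \<partial>?M) = integral\<^sup>L pv (fA i)"
        if "kk \<in> {1..b}" "i \<in> {1..n}" for kk i
        using int_comp1[OF pv that(1) intA[OF that(2)]] by auto
      have iB1: "integrable ?M (\<lambda>vs. fB (vs kk, vs c))" and iB2: "(\<integral>vs. fB (vs kk, vs c) \<partial>?M) = integral\<^sup>L (pv \<Otimes>\<^sub>M pv) fB"
        if "kk \<in> {1..b}" "c \<in> {1..b} - {kk}" for kk c
      proof -
        have c: "c \<in> {1..b}" "kk \<noteq> c" using that(2) by auto
        show "integrable ?M (\<lambda>vs. fB (vs kk, vs c))" "(\<integral>vs. fB (vs kk, vs c) \<partial>?M) = integral\<^sup>L (pv \<Otimes>\<^sub>M pv) fB"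
          using int_comp2[OF pv finite_atLeastAtMost that(1) c intB] by auto
      qed
      have intSA: "integrable ?M ?SA" by (intro Bochner_Integration.integrable_sum iA1) auto
      have intSB: "integrable ?M ?SB" by (intro Bochner_Integration.integrable_sum iB1) auto
      have ISA: "integral\<^sup>L ?M ?SA = real b * (\<Sum>i=1..n. integral\<^sup>L pv (fA i))"
      proof -
        have "integral\<^sup>L ?M ?SA = (\<Sum>kk=1..b. integral\<^sup>L ?M (\<lambda>vs. \<Sum>i=1..n. fA i (vs kk)))"
          by (rule Bochner_Integration.integral_sum) (intro Bochner_Integration.integrable_sum iA1; simp)
        also have "\<dots> = (\<Sum>kk=1..b. \<Sum>i=1..n. integral\<^sup>L pv (fA i))"
        proof (rule sum.cong[OF refl])
          fix kk assume kk: "kk \<in> {1..b}"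
          have "integral\<^sup>L ?M (\<lambda>vs. \<Sum>i=1..n. fA i (vs kk)) = (\<Sum>i=1..n. integral\<^sup>L ?M (\<lambda>vs. fA i (vs kk)))"
            by (rule Bochner_Integration.integral_sum) (intro iA1 kk; simp)
          also have "\<dots> = (\<Sum>i=1..n. integral\<^sup>L pv (fA i))"
            by (intro sum.cong refl iA2 kk) simp
          finally show "integral\<^sup>L ?M (\<lambda>vs. \<Sum>i=1..n. fA i (vs kk)) = (\<Sum>i=1..n. integral\<^sup>L pv (fA i))" .
        qed
        finally show ?thesis by simp
      qed
      have ISB: "integral\<^sup>L ?M ?SB = real b * (real b - 1) * integral\<^sup>L (pv \<Otimes>\<^sub>M pv) fB"
      proof -
        have "integral\<^sup>L ?M ?SB = (\<Sum>kk=1..b. integral\<^sup>L ?M (\<lambda>vs. \<Sum>c\<in>{1..b}-{kk}. fB (vs kk, vs c)))"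
          by (rule Bochner_Integration.integral_sum) (intro Bochner_Integration.integrable_sum iB1; simp)
        also have "\<dots> = (\<Sum>kk=1..b. \<Sum>c\<in>{1..b}-{kk}. integral\<^sup>L (pv \<Otimes>\<^sub>M pv) fB)"
        proof (rule sum.cong[OF refl])
          fix kk assume kk: "kk \<in> {1..b}"
          have "integral\<^sup>L ?M (\<lambda>vs. \<Sum>c\<in>{1..b}-{kk}. fB (vs kk, vs c)) = (\<Sum>c\<in>{1..b}-{kk}. integral\<^sup>L ?M (\<lambda>vs. fB (vs kk, vs c)))"
            by (rule Bochner_Integration.integral_sum) (intro iB1 kk; simp)
          also have "\<dots> = (\<Sum>c\<in>{1..b}-{kk}. integral\<^sup>L (pv \<Otimes>\<^sub>M pv) fB)"
            by (intro sum.cong refl iB2 kk) simp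
          finally show "integral\<^sup>L ?M (\<lambda>vs. \<Sum>c\<in>{1..b}-{kk}. fB (vs kk, vs c)) = (\<Sum>c\<in>{1..b}-{kk}. integral\<^sup>L (pv \<Otimes>\<^sub>M pv) fB)" .
        qed
        also have "\<dots> = (\<Sum>kk=1..b. (real b - 1) * integral\<^sup>L (pv \<Otimes>\<^sub>M pv) fB)"
          using b by (intro sum.cong refl) (simp add: cardb of_nat_diff)
        finally show ?thesis by simp
      qed
      have lhs: "(\<integral>vs. phi k G b n y \<theta> vs $ j \<partial>?M)
           = - 2 / real n * (\<Sum>i=1..n. integral\<^sup>L pv (fA i)) + integral\<^sup>L (pv \<Otimes>\<^sub>M pv) fB"
      proof -
        have "(\<integral>vs. phi k G b n y \<theta> vs $ j \<partial>?M) = ?c1 * integral\<^sup>L ?M ?SA + ?c2 * integral\<^sup>L ?M ?SB"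
          unfolding ph using intSA intSB by simp
        also have "\<dots> = - 2 / real n * (\<Sum>i=1..n. integral\<^sup>L pv (fA i)) + integral\<^sup>L (pv \<Otimes>\<^sub>M pv) fB"
          unfolding ISA ISB using b1 b by (simp add: field_simps)
        finally show ?thesis .
      qed
      have D: "((\<lambda>t. MMD_loss k pv G n y (\<theta> + t *\<^sub>R axis j 1)) has_real_derivative
           - 2 / real n * (\<Sum>i=1..n. integral\<^sup>L pv (fA i)) + integral\<^sup>L (pv \<Otimes>\<^sub>M pv) fB) (at 0)"
        unfolding MMD_loss_def fA_def fB_def
        using interchange1 interchange2 th
        by (intro DERIV_add DERIV_cmult DERIV_sum) auto
      show "(\<integral>vs. phi k G b n y \<theta> vs $ j \<partial>?M) = partial_deriv (MMD_loss k pv G n y) \<theta> j"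
        unfolding lhs partial_deriv_def by (rule DERIV_imp_deriv[OF D, symmetric])
    qed
  next
    show "\<forall>(Q :: 'd \<Rightarrow> real^'p \<Rightarrow> real^'d \<Rightarrow> real) (R :: 'd \<Rightarrow> real^'d \<Rightarrow> real) (S :: 'v set).
            (\<forall>j. \<forall>\<theta>\<in>Theta. \<forall>v\<in>S. \<forall>v'\<in>S. \<forall>yy.
               Q j yy \<theta> \<ge> \<bar>\<Sum>l\<in>UNIV. partial_deriv (\<lambda>u. k yy u) (G \<theta> v) l
                                      * partial_deriv (\<lambda>\<theta>'. G \<theta>' v $ l) \<theta> j\<bar>
             \<and> R j \<theta> \<ge> \<bar>\<Sum>l\<in>UNIV. partial_deriv (\<lambda>u. k u (G \<theta> v')) (G \<theta> v) l
                                      * partial_deriv (\<lambda>\<theta>'. G \<theta>' v $ l) \<theta> j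
                                    + partial_deriv (\<lambda>u'. k (G \<theta> v) u') (G \<theta> v') l
                                      * partial_deriv (\<lambda>\<theta>'. G \<theta>' v' $ l) \<theta> j\<bar>)
            \<longrightarrow> (\<forall>vs \<theta> \<nu> j. (\<forall>m\<in>{1..b}. vs m \<in> S) \<longrightarrow> \<theta> \<in> Theta
                   \<longrightarrow> (\<forall>i. \<nu> $ i \<in> {-1, 1})
                   \<longrightarrow> lambda_hat prior \<omega> (phi k G b n y \<theta> vs) \<theta> \<nu> j
                       \<le> \<bar>partial_deriv (\<lambda>\<theta>'. ln (prior \<theta>')) \<theta> j\<bar>
                          + \<omega> * (2 / real n * (\<Sum>i=1..n. Q j (y i) \<theta>))
                          + \<omega> * R j \<theta>)"
    proof (intro allI impI)
      fix Q :: "'d \<Rightarrow> real^'p \<Rightarrow> real^'d \<Rightarrow> real" and R :: "'d \<Rightarrow> real^'d \<Rightarrow> real" and S :: "'v set"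
        and vs :: "nat \<Rightarrow> 'v" and \<theta> :: "real^'d" and \<nu> :: "real^'d" and j :: 'd
      assume QR: "\<forall>j. \<forall>\<theta>\<in>Theta. \<forall>v\<in>S. \<forall>v'\<in>S. \<forall>yy.
               Q j yy \<theta> \<ge> \<bar>\<Sum>l\<in>UNIV. partial_deriv (\<lambda>u. k yy u) (G \<theta> v) l
                                      * partial_deriv (\<lambda>\<theta>'. G \<theta>' v $ l) \<theta> j\<bar>
             \<and> R j \<theta> \<ge> \<bar>\<Sum>l\<in>UNIV. partial_deriv (\<lambda>u. k u (G \<theta> v')) (G \<theta> v) l
                                      * partial_deriv (\<lambda>\<theta>'. G \<theta>' v $ l) \<theta> j
                                    + partial_deriv (\<lambda>u'. k (G \<theta> v) u') (G \<theta> v') l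
                                      * partial_deriv (\<lambda>\<theta>'. G \<theta>' v' $ l) \<theta> j\<bar>"
        and vsS: "\<forall>m\<in>{1..b}. vs m \<in> S" and th: "\<theta> \<in> Theta" and nu: "\<forall>i. \<nu> $ i \<in> {-1, 1}"
      define g where "g \<equiv> \<lambda>v l. partial_deriv (\<lambda>\<theta>'. G \<theta>' v $ l) \<theta> j"
      define A where "A \<equiv> \<lambda>v z. \<Sum>l\<in>UNIV. partial_deriv (\<lambda>w. k w z) (G \<theta> v) l * g v l"
      define B where "B \<equiv> \<lambda>v v'. \<Sum>l\<in>UNIV. partial_deriv (\<lambda>w. k w (G \<theta> v')) (G \<theta> v) l * g v l
                              + partial_deriv (\<lambda>w. k (G \<theta> v) w) (G \<theta> v') l * g v' l"
      let ?SA = "\<Sum>kk=1..b. \<Sum>i=1..n. A (vs kk) (y i)"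
      let ?SB = "\<Sum>kk=1..b. \<Sum>c\<in>{1..b}-{kk}. B (vs kk) (vs c)"
      have ph: "phi k G b n y \<theta> vs $ j = - 2 / (real n * real b) * ?SA + 1 / (real b * (real b - 1)) * ?SB"
        unfolding A_def B_def g_def by (rule phi_expr[OF H])
      have Aq: "\<bar>A v z\<bar> \<le> Q j z \<theta>" if "v \<in> S" for v z
      proof -
        have "(\<lambda>w. k w z) = (\<lambda>w. k z w)" using k_sym by auto
        then show ?thesis using QR th that unfolding A_def g_def by auto
      qed
      have Br: "\<bar>B v v'\<bar> \<le> R j \<theta>" if "v \<in> S" "v' \<in> S" for v v'
        using QR th that unfolding B_def g_def by auto
      have SA: "\<bar>?SA\<bar> \<le> real b * (\<Sum>i=1..n. Q j (y i) \<theta>)"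
      proof -
        have "\<bar>?SA\<bar> \<le> (\<Sum>kk=1..b. \<Sum>i=1..n. \<bar>A (vs kk) (y i)\<bar>)"
          by (rule order_trans[OF sum_abs sum_mono]) (rule sum_abs)
        also have "\<dots> \<le> (\<Sum>kk=1..b. \<Sum>i=1..n. Q j (y i) \<theta>)"
          using vsS by (intro sum_mono Aq) auto
        finally show ?thesis by simp
      qed
      have SB: "\<bar>?SB\<bar> \<le> real b * (real b - 1) * R j \<theta>"
      proof -
        have "\<bar>?SB\<bar> \<le> (\<Sum>kk=1..b. \<Sum>c\<in>{1..b}-{kk}. \<bar>B (vs kk) (vs c)\<bar>)"
          by (rule order_trans[OF sum_abs sum_mono]) (rule sum_abs)
        also have "\<dots> \<le> (\<Sum>kk=1..b. \<Sum>c\<in>{1..b}-{kk}. R j \<theta>)"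
          using vsS by (intro sum_mono Br) auto
        also have "\<dots> = (\<Sum>kk=1..b. (real b - 1) * R j \<theta>)"
          using b by (intro sum.cong refl) (simp add: cardb of_nat_diff)
        finally show ?thesis by simp
      qed
      have phib: "\<bar>phi k G b n y \<theta> vs $ j\<bar> \<le> 2 / real n * (\<Sum>i=1..n. Q j (y i) \<theta>) + R j \<theta>"
      proof -
        have "\<bar>phi k G b n y \<theta> vs $ j\<bar> \<le> 2 / (real n * real b) * \<bar>?SA\<bar> + 1 / (real b * (real b - 1)) * \<bar>?SB\<bar>"
          unfolding ph
        proof (rule order_trans[OF abs_triangle_ineq])
          have "\<bar>- 2 / (real n * real b)\<bar> = 2 / (real n * real b)" "\<bar>1 / (real b * (real b - 1))\<bar> = 1 / (real b * (real b - 1))"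
            using b1 by auto
          then show "\<bar>- 2 / (real n * real b) * ?SA\<bar> + \<bar>1 / (real b * (real b - 1)) * ?SB\<bar>
             \<le> 2 / (real n * real b) * \<bar>?SA\<bar> + 1 / (real b * (real b - 1)) * \<bar>?SB\<bar>"
            by (simp only: abs_mult)
        qed
        also have "\<dots> \<le> 2 / (real n * real b) * (real b * (\<Sum>i=1..n. Q j (y i) \<theta>))
             + 1 / (real b * (real b - 1)) * (real b * (real b - 1) * R j \<theta>)"
          using SA SB b1 n b by (intro add_mono mult_left_mono) auto
        also have "\<dots> = 2 / real n * (\<Sum>i=1..n. Q j (y i) \<theta>) + R j \<theta>"
          using b1 b by (simp add: field_simps)
        finally show ?thesis .
      qed
      let ?L = "partial_deriv (\<lambda>\<theta>'. ln (prior \<theta>')) \<theta> j"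
      have "lambda_hat prior \<omega> (phi k G b n y \<theta> vs) \<theta> \<nu> j \<le> \<bar>- ?L + \<omega> * phi k G b n y \<theta> vs $ j\<bar>"
        using nu[rule_format, of j] unfolding lambda_hat_def by auto
      also have "\<dots> \<le> \<bar>?L\<bar> + \<omega> * \<bar>phi k G b n y \<theta> vs $ j\<bar>"
      proof -
        have "\<bar>- ?L + \<omega> * phi k G b n y \<theta> vs $ j\<bar> \<le> \<bar>- ?L\<bar> + \<bar>\<omega> * phi k G b n y \<theta> vs $ j\<bar>"
          by (rule abs_triangle_ineq)
        then show ?thesis using \<omega> by (simp add: abs_mult)
      qed
      also have "\<dots> \<le> \<bar>?L\<bar> + \<omega> * (2 / real n * (\<Sum>i=1..n. Q j (y i) \<theta>) + R j \<theta>)"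
        using phib \<omega> by simp
      finally show "lambda_hat prior \<omega> (phi k G b n y \<theta> vs) \<theta> \<nu> j
                       \<le> \<bar>?L\<bar> + \<omega> * (2 / real n * (\<Sum>i=1..n. Q j (y i) \<theta>)) + \<omega> * R j \<theta>"
        by (simp add: algebra_simps)
    qed
  qed
qed
end
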